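(* For every $A\in\mathcal{M}_n$ there exist $B\in\mathcal{M}_n$ such that none of $\alpha^B_1,\dots,\alpha^B_n$ is of even exceptional type, and a graded ring isomorphism $\psi\colon H^*(M(A);\mathbb{Z})\to H^*(M(B);\mathbb{Z})$ with $\psi(p(M(A)))=p(M(B))$, where $p$ denotes the total Pontrjagin class.
   Context: Let $\mathcal{M}_n$ be the set of integral strictly upper triangular $n\times n$ matrices $A=(A^i_j)$ ($A^i_j$ is the $(i,j)$ entry, and $A^i_j=0$ for $i\ge j$). For $A\in\mathcal{M}_n$, $M(A)$ denotes the Bott manifold obtained as the quotient of $(S^3)^n$ ($S^3\subset\mathbb{C}^2$ the unit sphere) by the free $(S^1)^n$-action $(g_1,\dots,g_n)\cdot((z_1,w_1),\dots,(z_n,w_n))=\big(((\prod_{k<j}g_k^{-A^k_j})g_jz_j,\ g_jw_j)\big)_{j=1}^n$. Let $x^A_j\in H^2(M(A);\mathbb{Z})$ be the first Chern class of the line bundle obtained as the quotient of $(S^3)^n\times\mathbb{C}$ where $g$ acts on the $\mathbb{C}$-factor by $g_j^{-1}$. Put $\alpha^A_j=\sum_{i<j}A^i_jx^A_i$. Then $H^*(M(A);\mathbb{Z})=\mathbb{Z}[x^A_1,\dots,x^A_n]/((x^A_j)^2-\alpha^A_jx^A_j\mid j=1,\dots,n)$. Define $y^A_j=x^A_j-\tfrac12\alpha^A_j\in H^2(M(A);\mathbb{Q})$. The same notation is used for $B$. We say $\alpha^B_j$ is of exceptional type if $\alpha^B_j=cy^B_i$ for some nonzero integer $c$ and some $i<j$,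 and of even exceptional type if moreover this integer $c$ is even. *)

theory Defs
  imports Complex_Main "HOL-Algebra.QuotRing" "HOL-Library.Poly_Mapping"
begin

text \<open>Indices are 0-based: x_0,...,x_{n-1} correspond to x_1,...,x_n of the paper.\<close>

type_synonym 'a mpoly = "(nat \<Rightarrow>\<^sub>0 nat) \<Rightarrow>\<^sub>0 'a"

definition mvar :: "nat \<Rightarrow> 'a::comm_ring_1 mpoly" where
  "mvar i = Poly_Mapping.single (Poly_Mapping.single i 1) 1"

definition mconst :: "'a::comm_ring_1 \<Rightarrow> 'a mpoly" where
  "mconst c = Poly_Mapping.single 0 c"

definition mpoly_vars :: "'a::comm_ring_1 mpoly \<Rightarrow> nat set" where
  "mpoly_vars p = \<Union> (Poly_Mapping.keys ` Poly_Mapping.keys p)"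

definition homogeneous :: "nat \<Rightarrow> 'a::comm_ring_1 mpoly \<Rightarrow> bool" where
  "homogeneous k p \<longleftrightarrow>
     (\<forall>m \<in> Poly_Mapping.keys p. (\<Sum>i \<in> Poly_Mapping.keys m. Poly_Mapping.lookup m i) = k)"

definition poly_ring :: "nat \<Rightarrow> ('a::comm_ring_1 mpoly) ring" where
  "poly_ring n = \<lparr>carrier = {p. mpoly_vars p \<subseteq> {..<n}}, monoid.mult = (*), one = 1,
                  zero = 0, add = (+)\<rparr>"

text \<open>The set M_n of integral strictly upper triangular n x n matrices
  (entries A i j, 0-based, all entries outside the n x n range are 0).\<close>
definition bott_matrix :: "nat \<Rightarrow> (nat \<Rightarrow> nat \<Rightarrow> int) \<Rightarrow> bool" where
  "bott_matrix n A \<longleftrightarrow> (\<forall>i j. A i j \<noteq> 0 \<longrightarrow> i < j \<and> j < n)"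

definition bott_alpha :: "(nat \<Rightarrow> nat \<Rightarrow> int) \<Rightarrow> nat \<Rightarrow> 'a::comm_ring_1 mpoly" where
  "bott_alpha A j = (\<Sum>i<j. of_int (A i j) * mvar i)"

definition bott_ideal :: "nat \<Rightarrow> (nat \<Rightarrow> nat \<Rightarrow> int) \<Rightarrow> 'a::comm_ring_1 mpoly set" where
  "bott_ideal n A = genideal (poly_ring n) {mvar j ^ 2 - bott_alpha A j * mvar j | j. j < n}"

text \<open>H^*(M(A); 'a) = 'a[x_0..x_{n-1}] / (x_j^2 - alpha_j x_j); 'a = int or rat.\<close>
definition cohom :: "nat \<Rightarrow> (nat \<Rightarrow> nat \<Rightarrow> int) \<Rightarrow> ('a::comm_ring_1 mpoly set) ring" where
  "cohom n A = poly_ring n Quot bott_ideal n A"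

definition cohom_class :: "nat \<Rightarrow> (nat \<Rightarrow> nat \<Rightarrow> int) \<Rightarrow> 'a::comm_ring_1 mpoly \<Rightarrow> 'a mpoly set" where
  "cohom_class n A p = bott_ideal n A +>\<^bsub>poly_ring n\<^esub> p"

text \<open>H^d(M(A)): classes of homogeneous polynomials of degree d/2 (x_j has degree 2);
  zero in odd degrees.\<close>
definition cohom_deg :: "nat \<Rightarrow> (nat \<Rightarrow> nat \<Rightarrow> int) \<Rightarrow> nat \<Rightarrow> 'a::comm_ring_1 mpoly set set" where
  "cohom_deg n A d = {cohom_class n A p | p. p \<in> carrier (poly_ring n) \<and>
                         (p = 0 \<or> (even d \<and> homogeneous (d div 2) p))}"

definition graded_ring_iso :: "nat \<Rightarrow> (nat \<Rightarrow> nat \<Rightarrow> int) \<Rightarrow> (nat \<Rightarrow> nat \<Rightarrow> int)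
    \<Rightarrow> (int mpoly set \<Rightarrow> int mpoly set) \<Rightarrow> bool" where
  "graded_ring_iso n A B \<psi> \<longleftrightarrow>
     \<psi> \<in> ring_iso (cohom n A) (cohom n B) \<and> (\<forall>d. \<psi> ` cohom_deg n A d \<subseteq> cohom_deg n B d)"

definition pontrjagin :: "nat \<Rightarrow> (nat \<Rightarrow> nat \<Rightarrow> int) \<Rightarrow> int mpoly set" where
  "pontrjagin n A = cohom_class n A (\<Prod>j<n. 1 + bott_alpha A j ^ 2)"

definition bott_y :: "(nat \<Rightarrow> nat \<Rightarrow> int) \<Rightarrow> nat \<Rightarrow> rat mpoly" where
  "bott_y A i = mvar i - mconst (1/2) * bott_alpha A i"

definition even_exceptional :: "nat \<Rightarrow> (nat \<Rightarrow> nat \<Rightarrow> int) \<Rightarrow> nat \<Rightarrow> bool" where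
  "even_exceptional n B j \<longleftrightarrow>
     (\<exists>c::int. \<exists>i<j. c \<noteq> 0 \<and> even c \<and>
        cohom_class n B (bott_alpha B j :: rat mpoly) = cohom_class n B (of_int c * bott_y B i))"

end

theory Submission
  imports Defs
begin


lemma keys_add_nat: "Poly_Mapping.keys ((a::nat \<Rightarrow>\<^sub>0 nat) + b) = Poly_Mapping.keys a \<union> Poly_Mapping.keys b"
  by (auto simp: in_keys_iff lookup_add)

lemma mpoly_vars_0[simp]: "mpoly_vars 0 = {}" by (simp add: mpoly_vars_def)
lemma mpoly_vars_1[simp]: "mpoly_vars (1::'a::comm_ring_1 mpoly) = {}" by (simp add: mpoly_vars_def)
lemma mpoly_vars_add: "mpoly_vars (p + q) \<subseteq> mpoly_vars p \<union> mpoly_vars q"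
  unfolding mpoly_vars_def using keys_add[of p q] by blast
lemma mpoly_vars_uminus[simp]: "mpoly_vars (- p) = mpoly_vars p"
  unfolding mpoly_vars_def by (simp add: in_keys_iff)
lemma mpoly_vars_diff: "mpoly_vars (p - q) \<subseteq> mpoly_vars p \<union> mpoly_vars q"
  using mpoly_vars_add[of p "-q"] by simp
lemma mpoly_vars_mult: "mpoly_vars (p * q) \<subseteq> mpoly_vars p \<union> mpoly_vars q"
proof
  fix x assume "x \<in> mpoly_vars (p * q)"
  then obtain m where m: "m \<in> Poly_Mapping.keys (p*q)" "x \<in> Poly_Mapping.keys m"
    unfolding mpoly_vars_def by blast
  then obtain a b where "a \<in> Poly_Mapping.keys p" "b \<in> Poly_Mapping.keys q" "m = a + b"
    using keys_mult[of p q] by blast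
  then show "x \<in> mpoly_vars p \<union> mpoly_vars q" using m unfolding mpoly_vars_def
    by (auto simp: keys_add_nat)
qed

lemma carrier_poly_ring: "carrier (poly_ring n) = {p. mpoly_vars p \<subseteq> {..<n}}"
  by (simp add: poly_ring_def)

lemma poly_ring_simps[simp]: "carrier (poly_ring n) = {p. mpoly_vars p \<subseteq> {..<n}}"
  "mult (poly_ring n) = (*)" "one (poly_ring n) = 1" "zero (poly_ring n) = 0"
  "add (poly_ring n) = (+)"
  by (simp_all add: poly_ring_def)

lemma poly_ring_cring: "cring (poly_ring n :: 'a::comm_ring_1 mpoly ring)"
proof (rule cringI)
  show "abelian_group (poly_ring n :: 'a mpoly ring)"
  proof (rule abelian_groupI)
    fix x assume "x \<in> carrier (poly_ring n :: 'a mpoly ring)"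
    then show "\<exists>y\<in>carrier (poly_ring n :: 'a mpoly ring). y \<oplus>\<^bsub>poly_ring n\<^esub> x = \<zero>\<^bsub>poly_ring n\<^esub>"
      by (intro bexI[of _ "-x"]) auto
  qed (use mpoly_vars_add in \<open>fastforce simp: add.assoc add.commute\<close>)+
  show "comm_monoid (poly_ring n :: 'a mpoly ring)"
    by (rule comm_monoidI) (use mpoly_vars_mult in \<open>fastforce simp: mult.assoc mult.commute\<close>)+
qed (auto simp: distrib_right)

interpretation PR: cring "poly_ring n :: 'a::comm_ring_1 mpoly ring"
  by (rule poly_ring_cring)

lemma poly_ring_a_inv: "p \<in> carrier (poly_ring n) \<Longrightarrow> \<ominus>\<^bsub>poly_ring n\<^esub> p = - (p::'a::comm_ring_1 mpoly)"
  by (rule PR.add.inv_equality) auto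

lemma poly_ring_minus: "p \<in> carrier (poly_ring n) \<Longrightarrow> q \<in> carrier (poly_ring n) \<Longrightarrow> p \<ominus>\<^bsub>poly_ring n\<^esub> q = p - (q::'a::comm_ring_1 mpoly)"
  by (simp add: a_minus_def poly_ring_a_inv)



definition mono_ev :: "(nat \<Rightarrow> 'a::comm_ring_1 mpoly) \<Rightarrow> (nat \<Rightarrow>\<^sub>0 nat) \<Rightarrow> 'a mpoly" where
  "mono_ev \<sigma> m = (\<Prod>i\<in>Poly_Mapping.keys m. \<sigma> i ^ Poly_Mapping.lookup m i)"

definition ev :: "(nat \<Rightarrow> 'a::comm_ring_1 mpoly) \<Rightarrow> 'a mpoly \<Rightarrow> 'a mpoly" where
  "ev \<sigma> p = (\<Sum>m\<in>Poly_Mapping.keys p. mconst (Poly_Mapping.lookup p m) * mono_ev \<sigma> m)"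

lemma mono_ev_superset: "finite S \<Longrightarrow> Poly_Mapping.keys m \<subseteq> S \<Longrightarrow>
   mono_ev \<sigma> m = (\<Prod>i\<in>S. \<sigma> i ^ Poly_Mapping.lookup m i)"
  unfolding mono_ev_def by (rule prod.mono_neutral_left) (auto simp: in_keys_iff)

lemma mono_ev_add: "mono_ev \<sigma> (a + b) = mono_ev \<sigma> a * mono_ev \<sigma> b"
proof -
  let ?S = "Poly_Mapping.keys a \<union> Poly_Mapping.keys b"
  have "mono_ev \<sigma> (a + b) = (\<Prod>i\<in>?S. \<sigma> i ^ Poly_Mapping.lookup (a+b) i)"
    by (rule mono_ev_superset) (auto simp: keys_add_nat)
  also have "\<dots> = (\<Prod>i\<in>?S. \<sigma> i ^ Poly_Mapping.lookup a i) * (\<Prod>i\<in>?S. \<sigma> i ^ Poly_Mapping.lookup b i)"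
    by (simp add: lookup_add power_add prod.distrib)
  also have "\<dots> = mono_ev \<sigma> a * mono_ev \<sigma> b"
    by (simp add: mono_ev_superset[symmetric])
  finally show ?thesis .
qed

lemma mono_ev_0[simp]: "mono_ev \<sigma> 0 = 1" by (simp add: mono_ev_def)

lemma mconst_add: "mconst (a + b) = mconst a + mconst b" by (simp add: mconst_def single_add)
lemma mconst_mult: "mconst (a * b) = mconst a * mconst b" by (simp add: mconst_def mult_single)
lemma mconst_0[simp]: "mconst 0 = 0" by (simp add: mconst_def)
lemma mconst_1[simp]: "mconst 1 = 1" by (simp add: mconst_def)

lemma ev_superset: "finite S \<Longrightarrow> Poly_Mapping.keys p \<subseteq> S \<Longrightarrow>
   ev \<sigma> p = (\<Sum>m\<in>S. mconst (Poly_Mapping.lookup p m) * mono_ev \<sigma> m)"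
  unfolding ev_def by (rule sum.mono_neutral_left) (auto simp: in_keys_iff)

lemma ev_add: "ev \<sigma> (p + q) = ev \<sigma> p + ev \<sigma> q"
proof -
  let ?S = "Poly_Mapping.keys p \<union> Poly_Mapping.keys q"
  have "ev \<sigma> (p + q) = (\<Sum>m\<in>?S. mconst (Poly_Mapping.lookup (p+q) m) * mono_ev \<sigma> m)"
    by (rule ev_superset) (use keys_add[of p q] in auto)
  also have "\<dots> = (\<Sum>m\<in>?S. mconst (Poly_Mapping.lookup p m) * mono_ev \<sigma> m) + (\<Sum>m\<in>?S. mconst (Poly_Mapping.lookup q m) * mono_ev \<sigma> m)"
    by (simp add: lookup_add mconst_add distrib_right sum.distrib)
  also have "\<dots> = ev \<sigma> p + ev \<sigma> q"
    by (simp add: ev_superset[symmetric])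
  finally show ?thesis .
qed

lemma ev_0[simp]: "ev \<sigma> 0 = 0" by (simp add: ev_def)

lemma ev_uminus: "ev \<sigma> (- p) = - ev \<sigma> p"
  using ev_add[of \<sigma> p "-p"] by (simp add: eq_neg_iff_add_eq_0 add.commute)

lemma ev_diff: "ev \<sigma> (p - q) = ev \<sigma> p - ev \<sigma> q"
  using ev_add[of \<sigma> p "-q"] by (simp add: ev_uminus)

lemma ev_sum: "ev \<sigma> (sum f S) = (\<Sum>x\<in>S. ev \<sigma> (f x))"
  by (induction S rule: infinite_finite_induct) (auto simp: ev_add)

lemma ev_single: "ev \<sigma> (Poly_Mapping.single m c) = mconst c * mono_ev \<sigma> m"
  by (cases "c = 0") (auto simp: ev_def)

lemma poly_sum_singles: "p = (\<Sum>m\<in>Poly_Mapping.keys p. Poly_Mapping.single m (Poly_Mapping.lookup p m))"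
proof (rule poly_mapping_eqI)
  fix k
  show "Poly_Mapping.lookup p k = Poly_Mapping.lookup (\<Sum>m\<in>Poly_Mapping.keys p. Poly_Mapping.single m (Poly_Mapping.lookup p m)) k"
    by (cases "k \<in> Poly_Mapping.keys p")
       (auto simp: lookup_sum lookup_single when_def in_keys_iff sum.delta)
qed

lemma ev_mult: "ev \<sigma> (p * q) = ev \<sigma> p * ev \<sigma> q"
proof -
  let ?sp = "\<lambda>m. Poly_Mapping.single m (Poly_Mapping.lookup p m)"
  let ?sq = "\<lambda>m. Poly_Mapping.single m (Poly_Mapping.lookup q m)"
  have "p * q = (\<Sum>a\<in>Poly_Mapping.keys p. ?sp a) * (\<Sum>b\<in>Poly_Mapping.keys q. ?sq b)"
    by (subst poly_sum_singles[of p], subst poly_sum_singles[of q]) (rule refl)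
  also have "\<dots> = (\<Sum>a\<in>Poly_Mapping.keys p. \<Sum>b\<in>Poly_Mapping.keys q. ?sp a * ?sq b)"
    by (simp add: sum_product)
  finally have pq: "p * q = \<dots>" .
  have "ev \<sigma> (p * q) = (\<Sum>a\<in>Poly_Mapping.keys p. \<Sum>b\<in>Poly_Mapping.keys q. ev \<sigma> (?sp a) * ev \<sigma> (?sq b))"
    unfolding pq ev_sum
    by (simp add: mult_single ev_single mono_ev_add mconst_mult mult_ac)
  also have "\<dots> = (\<Sum>a\<in>Poly_Mapping.keys p. ev \<sigma> (?sp a)) * (\<Sum>b\<in>Poly_Mapping.keys q. ev \<sigma> (?sq b))"
    by (simp add: sum_product)
  also have "\<dots> = ev \<sigma> p * ev \<sigma> q"
    by (simp add: ev_sum[symmetric] poly_sum_singles[symmetric])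
  finally show ?thesis .
qed

lemma ev_1[simp]: "ev \<sigma> 1 = 1"
  by (metis ev_single mconst_1 mono_ev_0 mult_1 single_one)

lemma ev_mconst[simp]: "ev \<sigma> (mconst c) = mconst c"
  by (simp add: mconst_def ev_single)

lemma ev_of_int[simp]: "ev \<sigma> (of_int c) = of_int c"
  by (metis ev_mconst mconst_def single_of_int)

lemma ev_mvar[simp]: "ev \<sigma> (mvar i) = \<sigma> i"
  by (simp add: mvar_def ev_single mono_ev_def)

lemma ev_power: "ev \<sigma> (p ^ k) = ev \<sigma> p ^ k"
  by (induction k) (auto simp: ev_mult)

lemma ev_prod: "ev \<sigma> (prod f S) = (\<Prod>x\<in>S. ev \<sigma> (f x))"
  by (induction S rule: infinite_finite_induct) (auto simp: ev_mult)



lemma single_power: "Poly_Mapping.single (Poly_Mapping.single i (1::nat)) (1::'a::comm_ring_1) ^ k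
   = Poly_Mapping.single (Poly_Mapping.single i k) 1"
proof (induction k)
  case (Suc k)
  have "Poly_Mapping.single i (Suc k) = Poly_Mapping.single i 1 + Poly_Mapping.single i k"
    by (simp add: single_add[symmetric])
  then show ?case using Suc by (simp add: mult_single)
qed simp

lemma prod_single_mpoly: "(\<Prod>i\<in>S. Poly_Mapping.single (f i) (1::'a::comm_ring_1)) = Poly_Mapping.single (\<Sum>i\<in>S. f i) 1"
  by (induction S rule: infinite_finite_induct) (auto simp: mult_single)

lemma mono_ev_mvar: "mono_ev mvar m = (Poly_Mapping.single m 1 :: 'a::comm_ring_1 mpoly)"
proof -
  have "mono_ev mvar m = (\<Prod>i\<in>Poly_Mapping.keys m. Poly_Mapping.single (Poly_Mapping.single i (Poly_Mapping.lookup m i)) (1::'a))"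
    unfolding mono_ev_def mvar_def by (intro prod.cong refl) (rule single_power)
  also have "\<dots> = Poly_Mapping.single m 1"
    by (simp add: prod_single_mpoly poly_sum_singles[symmetric])
  finally show ?thesis .
qed

lemma ev_mvar_id: "ev mvar p = p"
proof -
  have "ev mvar p = (\<Sum>m\<in>Poly_Mapping.keys p. Poly_Mapping.single m (Poly_Mapping.lookup p m))"
    unfolding ev_def mono_ev_mvar by (simp add: mconst_def mult_single)
  then show ?thesis by (simp add: poly_sum_singles[symmetric])
qed

lemma ev_ev: "ev \<tau> (ev \<sigma> p) = ev (\<lambda>i. ev \<tau> (\<sigma> i)) p"
  unfolding ev_def[of \<sigma>] by (simp add: ev_sum ev_mult mono_ev_def ev_prod ev_power ev_def[of "\<lambda>i. ev \<tau> (\<sigma> i)"])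

lemma mpoly_vars_mconst[simp]: "mpoly_vars (mconst c) = {}"
  by (simp add: mpoly_vars_def mconst_def)

lemma keys_sub_vars: "m \<in> Poly_Mapping.keys p \<Longrightarrow> Poly_Mapping.keys m \<subseteq> mpoly_vars p"
  unfolding mpoly_vars_def by blast

lemma carr_sum: "(\<And>x. x \<in> S \<Longrightarrow> f x \<in> carrier (poly_ring n)) \<Longrightarrow> (sum f S :: 'a::comm_ring_1 mpoly) \<in> carrier (poly_ring n)"
  by (induction S rule: infinite_finite_induct) (use mpoly_vars_add in fastforce)+

lemma carr_prod: "(\<And>x. x \<in> S \<Longrightarrow> f x \<in> carrier (poly_ring n)) \<Longrightarrow> (prod f S :: 'a::comm_ring_1 mpoly) \<in> carrier (poly_ring n)"
  by (induction S rule: infinite_finite_induct) (use mpoly_vars_mult in fastforce)+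

lemma carr_power: "x \<in> carrier (poly_ring n) \<Longrightarrow> (x ^ k :: 'a::comm_ring_1 mpoly) \<in> carrier (poly_ring n)"
  by (induction k) (use mpoly_vars_mult in fastforce)+

lemma carr_mult: "x \<in> carrier (poly_ring n) \<Longrightarrow> y \<in> carrier (poly_ring n) \<Longrightarrow> (x * y :: 'a::comm_ring_1 mpoly) \<in> carrier (poly_ring n)"
  using mpoly_vars_mult by fastforce
lemma carr_add: "x \<in> carrier (poly_ring n) \<Longrightarrow> y \<in> carrier (poly_ring n) \<Longrightarrow> (x + y :: 'a::comm_ring_1 mpoly) \<in> carrier (poly_ring n)"
  using mpoly_vars_add by fastforce
lemma carr_diff: "x \<in> carrier (poly_ring n) \<Longrightarrow> y \<in> carrier (poly_ring n) \<Longrightarrow> (x - y :: 'a::comm_ring_1 mpoly) \<in> carrier (poly_ring n)"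
  using mpoly_vars_diff by fastforce
lemma carr_mconst: "mconst c \<in> carrier (poly_ring n)" by simp
lemma carr_of_int: "(of_int c :: 'a::comm_ring_1 mpoly) \<in> carrier (poly_ring n)"
  by (metis carr_mconst mconst_def single_of_int)
lemma carr_mvar: "i < n \<Longrightarrow> (mvar i :: 'a::comm_ring_1 mpoly) \<in> carrier (poly_ring n)"
  by (simp add: mpoly_vars_def mvar_def)

lemma ev_carr:
  assumes "p \<in> carrier (poly_ring n)" "\<And>i. i < n \<Longrightarrow> \<sigma> i \<in> carrier (poly_ring n)"
  shows "ev \<sigma> (p :: 'a::comm_ring_1 mpoly) \<in> carrier (poly_ring n)"
  unfolding ev_def mono_ev_def
proof (intro carr_sum carr_mult carr_mconst carr_prod carr_power)
  fix m i assume "m \<in> Poly_Mapping.keys p" "i \<in> Poly_Mapping.keys m"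
  then have "i < n" using assms(1) keys_sub_vars by fastforce
  then show "\<sigma> i \<in> carrier (poly_ring n)" by (rule assms(2))
qed

definition mdeg :: "(nat \<Rightarrow>\<^sub>0 nat) \<Rightarrow> nat" where
  "mdeg m = (\<Sum>i\<in>Poly_Mapping.keys m. Poly_Mapping.lookup m i)"

lemma mdeg_superset: "finite S \<Longrightarrow> Poly_Mapping.keys m \<subseteq> S \<Longrightarrow> mdeg m = (\<Sum>i\<in>S. Poly_Mapping.lookup m i)"
  unfolding mdeg_def by (rule sum.mono_neutral_left) (auto simp: in_keys_iff)

lemma mdeg_add: "mdeg (a + b) = mdeg a + mdeg b"
proof -
  let ?S = "Poly_Mapping.keys a \<union> Poly_Mapping.keys b"
  have "mdeg (a+b) = (\<Sum>i\<in>?S. Poly_Mapping.lookup (a+b) i)"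
    by (rule mdeg_superset) (auto simp: keys_add_nat)
  also have "\<dots> = (\<Sum>i\<in>?S. Poly_Mapping.lookup a i) + (\<Sum>i\<in>?S. Poly_Mapping.lookup b i)"
    by (simp add: lookup_add sum.distrib)
  finally show ?thesis by (simp add: mdeg_superset[symmetric])
qed

lemma homogeneous_mdeg: "homogeneous k p \<longleftrightarrow> (\<forall>m\<in>Poly_Mapping.keys p. mdeg m = k)"
  by (simp add: homogeneous_def mdeg_def)

lemma hom_add: "homogeneous k p \<Longrightarrow> homogeneous k q \<Longrightarrow> homogeneous k (p + q)"
  unfolding homogeneous_mdeg using keys_add[of p q] by blast

lemma hom_0[simp]: "homogeneous k 0" by (simp add: homogeneous_mdeg)

lemma hom_sum: "(\<And>x. x \<in> S \<Longrightarrow> homogeneous k (f x)) \<Longrightarrow> homogeneous k (sum f S)"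
  by (induction S rule: infinite_finite_induct) (auto intro: hom_add)

lemma hom_mult: "homogeneous a p \<Longrightarrow> homogeneous b q \<Longrightarrow> homogeneous (a + b) (p * q)"
  unfolding homogeneous_mdeg using keys_mult[of p q] by (fastforce simp: mdeg_add)

lemma hom_1: "homogeneous 0 (1::'a::comm_ring_1 mpoly)"
  by (simp add: homogeneous_mdeg mdeg_def)

lemma hom_mconst: "homogeneous 0 (mconst c)"
  by (simp add: homogeneous_mdeg mdeg_def mconst_def)

lemma hom_power: "homogeneous a p \<Longrightarrow> homogeneous (k * a) (p ^ k)"
  by (induction k) (auto simp: hom_1 intro: hom_mult)

lemma hom_prod: "(\<And>x. x \<in> S \<Longrightarrow> homogeneous (g x) (f x)) \<Longrightarrow> homogeneous (\<Sum>x\<in>S. g x) (prod f S :: 'a::comm_ring_1 mpoly)"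
  by (induction S rule: infinite_finite_induct) (auto simp: hom_1 intro: hom_mult)

lemma ev_hom:
  assumes "homogeneous k p" "\<And>i. homogeneous 1 (\<sigma> i)"
  shows "homogeneous k (ev \<sigma> (p :: 'a::comm_ring_1 mpoly))"
  unfolding ev_def
proof (rule hom_sum)
  fix m assume m: "m \<in> Poly_Mapping.keys p"
  have "homogeneous (0 + mdeg m) (mconst (Poly_Mapping.lookup p m) * mono_ev \<sigma> m)"
    unfolding mono_ev_def mdeg_def
    by (intro hom_mult hom_mconst hom_prod) (use hom_power[OF assms(2)] in simp)
  then show "homogeneous k (mconst (Poly_Mapping.lookup p m) * mono_ev \<sigma> m)"
    using m assms(1) by (simp add: homogeneous_mdeg)
qed



lemma cls_eq:
  assumes "ideal I (poly_ring n)" "p \<in> carrier (poly_ring n)" "q \<in> carrier (poly_ring n)"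
  shows "(I +>\<^bsub>poly_ring n\<^esub> p = I +>\<^bsub>poly_ring n\<^esub> q) \<longleftrightarrow> p - q \<in> (I :: 'a::comm_ring_1 mpoly set)"
proof -
  interpret ideal I "poly_ring n" by fact
  have eq: "(p \<in> I +>\<^bsub>poly_ring n\<^esub> q) = (p \<ominus>\<^bsub>poly_ring n\<^esub> q \<in> I)"
    by (rule a_rcos_module_minus[OF PR.ring_axioms]) (use assms in auto)
  show ?thesis
  proof
    assume "I +>\<^bsub>poly_ring n\<^esub> p = I +>\<^bsub>poly_ring n\<^esub> q"
    then have "p \<in> I +>\<^bsub>poly_ring n\<^esub> q" using a_repr_independenceD[of p q] assms by auto
    then show "p - q \<in> I" using eq poly_ring_minus[OF assms(2,3)] by simp
  next
    assume "p - q \<in> I"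
    then have "p \<in> I +>\<^bsub>poly_ring n\<^esub> q" using eq poly_ring_minus[OF assms(2,3)] by simp
    then show "I +>\<^bsub>poly_ring n\<^esub> p = I +>\<^bsub>poly_ring n\<^esub> q"
      using a_repr_independence'[of p q] assms by auto
  qed
qed

definition gens :: "nat \<Rightarrow> (nat \<Rightarrow> nat \<Rightarrow> int) \<Rightarrow> 'a::comm_ring_1 mpoly set" where
  "gens n A = {mvar j ^ 2 - bott_alpha A j * mvar j | j. j < n}"

lemma alpha_carr: "j \<le> n \<Longrightarrow> (bott_alpha A j :: 'a::comm_ring_1 mpoly) \<in> carrier (poly_ring n)"
  unfolding bott_alpha_def
proof (rule carr_sum)
  fix i assume "i \<in> {..<j}" "j \<le> n"
  then have "i < n" by simp
  then show "of_int (A i j) * mvar i \<in> (carrier (poly_ring n) :: 'a mpoly set)"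
    by (intro carr_mult carr_of_int carr_mvar)
qed

lemma gens_carr: "gens n A \<subseteq> (carrier (poly_ring n) :: 'a::comm_ring_1 mpoly set)"
proof
  fix g assume "g \<in> (gens n A :: 'a mpoly set)"
  then obtain j where j: "j < n" "g = mvar j ^ 2 - bott_alpha A j * mvar j" unfolding gens_def by blast
  have "mvar j ^ 2 - bott_alpha A j * mvar j \<in> (carrier (poly_ring n) :: 'a mpoly set)"
    by (rule carr_diff[OF carr_power[OF carr_mvar] carr_mult[OF alpha_carr carr_mvar]]) (use j in auto)
  then show "g \<in> carrier (poly_ring n)" using j by simp
qed

lemma bott_ideal_gens: "bott_ideal n A = genideal (poly_ring n) (gens n A)"
  by (simp add: bott_ideal_def gens_def)

lemma bott_ideal_ideal: "ideal (bott_ideal n A :: 'a::comm_ring_1 mpoly set) (poly_ring n)"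
  unfolding bott_ideal_gens by (rule PR.genideal_ideal[OF gens_carr])

lemma gen_in_ideal: "j < n \<Longrightarrow> mvar j ^ 2 - bott_alpha A j * mvar j \<in> (bott_ideal n A :: 'a::comm_ring_1 mpoly set)"
  proof -
  assume "j < n"
  then have "mvar j ^ 2 - bott_alpha A j * mvar j \<in> (gens n A :: 'a mpoly set)" unfolding gens_def by blast
  then show ?thesis unfolding bott_ideal_gens using PR.genideal_self[OF gens_carr, of n A] by (rule subsetD[rotated])
qed

lemma ideal_carr: "bott_ideal n A \<subseteq> (carrier (poly_ring n) :: 'a::comm_ring_1 mpoly set)"
  by (intro subsetI) (rule ideal.Icarr[OF bott_ideal_ideal])

lemma cohom_class_eq:
  assumes "p \<in> carrier (poly_ring n)" "q \<in> carrier (poly_ring n)"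
  shows "cohom_class n A p = cohom_class n A q \<longleftrightarrow> p - q \<in> (bott_ideal n A :: 'a::comm_ring_1 mpoly set)"
  unfolding cohom_class_def by (rule cls_eq[OF bott_ideal_ideal assms])

lemma ev_cong: "(\<And>i. i \<in> mpoly_vars p \<Longrightarrow> \<sigma> i = \<tau> i) \<Longrightarrow> ev \<sigma> p = ev \<tau> p"
  unfolding ev_def mono_ev_def
  by (intro sum.cong refl arg_cong2[where f="(*)"] prod.cong) (metis mpoly_vars_def UN_I)

lemma ev_ring_hom:
  assumes "\<And>i. i < n \<Longrightarrow> \<sigma> i \<in> carrier (poly_ring n)"
  shows "ev \<sigma> \<in> ring_hom (poly_ring n) (poly_ring n :: 'a::comm_ring_1 mpoly ring)"
proof (rule ring_hom_memI)
  fix x assume "x \<in> carrier (poly_ring n :: 'a mpoly ring)"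
  then show "ev \<sigma> x \<in> carrier (poly_ring n)" by (rule ev_carr) (rule assms)
qed (auto simp: ev_mult ev_add)

lemma ev_ideal:
  assumes "\<And>i. i < n \<Longrightarrow> \<sigma> i \<in> carrier (poly_ring n)"
    and "\<And>g. g \<in> gens n A \<Longrightarrow> ev \<sigma> g \<in> bott_ideal n B"
  shows "p \<in> bott_ideal n A \<Longrightarrow> ev \<sigma> p \<in> (bott_ideal n B :: 'a::comm_ring_1 mpoly set)"
proof -
  interpret H: ring_hom_ring "poly_ring n" "poly_ring n :: 'a mpoly ring" "ev \<sigma>"
    by (rule ring_hom_ringI2[OF PR.ring_axioms PR.ring_axioms ev_ring_hom[OF assms(1)]])
  have "ideal {r \<in> carrier (poly_ring n). ev \<sigma> r \<in> bott_ideal n B} (poly_ring n)"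
    by (rule H.ideal_vimage[OF bott_ideal_ideal])
  then have "bott_ideal n A \<subseteq> {r \<in> carrier (poly_ring n). ev \<sigma> r \<in> (bott_ideal n B :: 'a mpoly set)}"
    unfolding bott_ideal_gens[of n A]
    by (rule PR.genideal_minimal) (use gens_carr assms(2) in auto)
  then show "p \<in> bott_ideal n A \<Longrightarrow> ev \<sigma> p \<in> bott_ideal n B" by auto
qed



lemma quot_iso:
  fixes \<sigma> \<tau> :: "nat \<Rightarrow> 'a::comm_ring_1 mpoly"
  assumes sc: "\<And>i. i < n \<Longrightarrow> \<sigma> i \<in> carrier (poly_ring n)"
    and tc: "\<And>i. i < n \<Longrightarrow> \<tau> i \<in> carrier (poly_ring n)"
    and ts: "\<And>i. i < n \<Longrightarrow> ev \<tau> (\<sigma> i) = mvar i"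
    and st: "\<And>i. i < n \<Longrightarrow> ev \<sigma> (\<tau> i) = mvar i"
    and sg: "\<And>g. g \<in> gens n A \<Longrightarrow> ev \<sigma> g \<in> bott_ideal n B"
    and tg: "\<And>g. g \<in> gens n B \<Longrightarrow> ev \<tau> g \<in> bott_ideal n A"
  shows "\<exists>\<psi>. \<psi> \<in> ring_iso (cohom n A) (cohom n B) \<and>
     (\<forall>p\<in>carrier (poly_ring n). \<psi> (cohom_class n A p) = cohom_class n B (ev \<sigma> p))"
proof -
  let ?R = "poly_ring n :: 'a mpoly ring"
  let ?IA = "bott_ideal n A :: 'a mpoly set"
  let ?IB = "bott_ideal n B :: 'a mpoly set"
  interpret IB: ideal ?IB ?R by (rule bott_ideal_ideal)
  have inv1: "ev \<tau> (ev \<sigma> p) = p" if "p \<in> carrier ?R" for p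
  proof -
    have "ev \<tau> (ev \<sigma> p) = ev (\<lambda>i. ev \<tau> (\<sigma> i)) p" by (rule ev_ev)
    also have "\<dots> = ev mvar p" by (rule ev_cong) (use that ts in auto)
    finally show ?thesis by (simp add: ev_mvar_id)
  qed
  have inv2: "ev \<sigma> (ev \<tau> p) = p" if "p \<in> carrier ?R" for p
  proof -
    have "ev \<sigma> (ev \<tau> p) = ev (\<lambda>i. ev \<sigma> (\<tau> i)) p" by (rule ev_ev)
    also have "\<dots> = ev mvar p" by (rule ev_cong) (use that st in auto)
    finally show ?thesis by (simp add: ev_mvar_id)
  qed
  define h where "h = (\<lambda>r. ?IB +>\<^bsub>?R\<^esub> ev \<sigma> r)"
  have hhom: "h \<in> ring_hom ?R (cohom n B)"
  proof -
    have "((+>\<^bsub>?R\<^esub>) ?IB) \<circ> ev \<sigma> \<in> ring_hom ?R (cohom n B)"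
      using ring_hom_trans[OF ev_ring_hom[OF sc] IB.rcos_ring_hom] by (simp add: cohom_def)
    then show ?thesis by (simp add: h_def comp_def)
  qed
  interpret H: ring_hom_ring ?R "cohom n B" h
    by (rule ring_hom_ringI2[OF PR.ring_axioms _ hhom]) (simp add: cohom_def IB.quotient_is_ring)
  have ker: "a_kernel ?R (cohom n B) h = ?IA"
  proof -
    have z: "\<zero>\<^bsub>cohom n B\<^esub> = ?IB" by (simp add: cohom_def FactRing_def)
    have IB0: "?IB +>\<^bsub>?R\<^esub> 0 = ?IB"
      by (rule IB.a_rcos_const) (metis IB.additive_subgroup_axioms additive_subgroup.zero_closed poly_ring_simps(4))
    have eqv: "h r = \<zero>\<^bsub>cohom n B\<^esub> \<longleftrightarrow> ev \<sigma> r \<in> ?IB" if r: "r \<in> carrier ?R" for r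
    proof -
      have c: "ev \<sigma> r \<in> carrier ?R" using ev_carr[OF r sc] .
      have "h r = ?IB +>\<^bsub>?R\<^esub> 0 \<longleftrightarrow> ev \<sigma> r - 0 \<in> ?IB"
        unfolding h_def by (rule cls_eq[OF bott_ideal_ideal c]) simp
      then show ?thesis by (simp only: z IB0 diff_zero)
    qed
    have "a_kernel ?R (cohom n B) h = {r \<in> carrier ?R. ev \<sigma> r \<in> ?IB}"
      unfolding a_kernel_def' using eqv by blast
    also have "\<dots> = ?IA"
    proof
      show "{r \<in> carrier ?R. ev \<sigma> r \<in> ?IB} \<subseteq> ?IA"
      proof clarify
        fix r assume r: "r \<in> carrier ?R" "ev \<sigma> r \<in> ?IB"
        have "ev \<tau> (ev \<sigma> r) \<in> ?IA" by (rule ev_ideal[OF tc tg r(2)])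
        then show "r \<in> ?IA" using inv1[OF r(1)] by simp
      qed
      show "?IA \<subseteq> {r \<in> carrier ?R. ev \<sigma> r \<in> ?IB}"
        using ev_ideal[OF sc sg] ideal_carr by blast
    qed
    finally show ?thesis .
  qed
  have surj: "h ` carrier ?R = carrier (cohom n B)"
  proof
    show "h ` carrier ?R \<subseteq> carrier (cohom n B)" using ring_hom_closed[OF hhom] by (intro image_subsetI)
    show "carrier (cohom n B) \<subseteq> h ` carrier ?R"
    proof
      fix X :: "'a mpoly set" assume "X \<in> carrier (cohom n B)"
      then obtain q where q: "q \<in> carrier ?R" "X = ?IB +>\<^bsub>?R\<^esub> q"
        unfolding cohom_def FactRing_def A_RCOSETS_def' by (simp, blast)
      have "X = h (ev \<tau> q)" using q inv2 by (simp add: h_def)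
      moreover have "ev \<tau> q \<in> carrier ?R" using ev_carr[OF q(1) tc] .
      ultimately show "X \<in> h ` carrier ?R" by blast
    qed
  qed
  have iso: "(\<lambda>X. the_elem (h ` X)) \<in> ring_iso (cohom n A) (cohom n B)"
    using H.FactRing_iso_set[OF surj] unfolding ker by (simp add: cohom_def[of n A])
  have val: "the_elem (h ` (cohom_class n A p)) = cohom_class n B (ev \<sigma> p)" if "p \<in> carrier ?R" for p
    using H.the_elem_simp[OF that] unfolding ker by (simp add: cohom_class_def h_def)
  show ?thesis using iso val by blast
qed



lemma ideal_add: "ideal I (poly_ring n) \<Longrightarrow> a \<in> I \<Longrightarrow> b \<in> I \<Longrightarrow> a + b \<in> (I :: 'a::comm_ring_1 mpoly set)"
  using additive_subgroup.a_closed[of I "poly_ring n" a b] ideal.axioms(1) by fastforce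

lemma ideal_uminus: "ideal I (poly_ring n) \<Longrightarrow> a \<in> I \<Longrightarrow> - a \<in> (I :: 'a::comm_ring_1 mpoly set)"
  using additive_subgroup.a_inv_closed[of I "poly_ring n" a] ideal.axioms(1) poly_ring_a_inv ideal.Icarr
  by metis

lemma ideal_diff: "ideal I (poly_ring n) \<Longrightarrow> a \<in> I \<Longrightarrow> b \<in> I \<Longrightarrow> a - b \<in> (I :: 'a::comm_ring_1 mpoly set)"
  using ideal_add[of I n a "-b"] ideal_uminus[of I n b] by simp

lemma ideal_mult: "ideal I (poly_ring n) \<Longrightarrow> a \<in> I \<Longrightarrow> x \<in> carrier (poly_ring n) \<Longrightarrow> x * a \<in> (I :: 'a::comm_ring_1 mpoly set)"
  using ideal.I_l_closed[of I "poly_ring n" a x] by simp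

lemma ideal_zero: "ideal I (poly_ring n) \<Longrightarrow> 0 \<in> (I :: 'a::comm_ring_1 mpoly set)"
  using additive_subgroup.zero_closed[of I "poly_ring n"] ideal.axioms(1) by fastforce

lemma prod_diff_ideal:
  assumes I: "ideal I (poly_ring n)"
    and "\<And>k. k \<in> S \<Longrightarrow> f k \<in> carrier (poly_ring n) \<and> g k \<in> carrier (poly_ring n) \<and> f k - g k \<in> (I :: 'a::comm_ring_1 mpoly set)"
  shows "prod f S - prod g S \<in> I"
  using assms(2)
proof (induction S rule: infinite_finite_induct)
  case (infinite S) then show ?case using ideal_zero[OF I] by simp
next
  case empty then show ?case using ideal_zero[OF I] by simp
next
  case (insert a S)
  have e: "prod f (insert a S) - prod g (insert a S) = f a * (prod f S - prod g S) + prod g S * (f a - g a)"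
    using insert(1,2) by (simp add: algebra_simps)
  have "prod g S \<in> carrier (poly_ring n)" by (rule carr_prod) (use insert in auto)
  then show ?case unfolding e
    by (intro ideal_add[OF I] ideal_mult[OF I]) (use insert in auto)
qed

definition Jdeg :: "nat \<Rightarrow> 'a::comm_ring_1 mpoly set" where
  "Jdeg n = {p \<in> carrier (poly_ring n). \<forall>m\<in>Poly_Mapping.keys p. 2 \<le> mdeg m}"

lemma Jdeg_ideal: "ideal (Jdeg n :: 'a::comm_ring_1 mpoly set) (poly_ring n)"
proof (rule idealI[OF PR.ring_axioms])
  show "subgroup (Jdeg n :: 'a mpoly set) (add_monoid (poly_ring n))"
  proof (rule group.subgroupI)
    show "group (add_monoid (poly_ring n :: 'a mpoly ring))" by (rule PR.add.group_axioms)
    show "Jdeg n \<subseteq> carrier (add_monoid (poly_ring n :: 'a mpoly ring))" by (auto simp: Jdeg_def)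
    show "Jdeg n \<noteq> ({} :: 'a mpoly set)" unfolding Jdeg_def by (intro ex_in_conv[THEN iffD1] exI[of _ 0]) simp
    fix a b :: "'a mpoly" assume a: "a \<in> Jdeg n" and b: "b \<in> Jdeg n"
    have "inv\<^bsub>add_monoid (poly_ring n)\<^esub> a = - a"
      using poly_ring_a_inv[of a n] a unfolding Jdeg_def a_inv_def by simp
    then show "inv\<^bsub>add_monoid (poly_ring n)\<^esub> a \<in> Jdeg n" using a by (auto simp: Jdeg_def in_keys_iff)
    show "a \<otimes>\<^bsub>add_monoid (poly_ring n)\<^esub> b \<in> Jdeg n"
      using a b keys_add[of a b] carr_add[of a n b] by (auto simp: Jdeg_def)
  qed
next
  fix a x :: "'a mpoly" assume a: "a \<in> Jdeg n" and x: "x \<in> carrier (poly_ring n)"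
  have "x * a \<in> Jdeg n"
    unfolding Jdeg_def
  proof (intro CollectI conjI ballI)
    show "x * a \<in> carrier (poly_ring n)" using carr_mult[OF x] a by (auto simp: Jdeg_def)
    fix m assume "m \<in> Poly_Mapping.keys (x * a)"
    then obtain u v where "u \<in> Poly_Mapping.keys x" "v \<in> Poly_Mapping.keys a" "m = u + v"
      using keys_mult[of x a] by blast
    then show "2 \<le> mdeg m" using a by (auto simp: Jdeg_def mdeg_add)
  qed
  then show "x \<otimes>\<^bsub>poly_ring n\<^esub> a \<in> Jdeg n" "a \<otimes>\<^bsub>poly_ring n\<^esub> x \<in> Jdeg n"
    by (simp_all add: mult.commute)
qed

lemma mdeg_single: "mdeg (Poly_Mapping.single i k) = k"
  by (simp add: mdeg_def)

lemma mvar_sq_keys: "Poly_Mapping.keys ((mvar j :: 'a::comm_ring_1 mpoly) ^ 2) \<subseteq> {Poly_Mapping.single j 2}"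
proof -
  have "(mvar j :: 'a mpoly) ^ 2 = Poly_Mapping.single (Poly_Mapping.single j 2) 1"
    unfolding mvar_def using single_power[of j 2] by simp
  then show ?thesis by simp
qed

lemma keys_alpha_mvar: "m \<in> Poly_Mapping.keys ((bott_alpha A j :: 'a::comm_ring_1 mpoly) * mvar j) \<Longrightarrow> mdeg m = 2"
proof -
  assume "m \<in> Poly_Mapping.keys ((bott_alpha A j :: 'a mpoly) * mvar j)"
  moreover have "homogeneous 1 (bott_alpha A j :: 'a mpoly)"
    unfolding bott_alpha_def
  proof (rule hom_sum)
    fix i
    have "homogeneous (0 + 1) (of_int (A i j) * mvar i :: 'a mpoly)"
    proof (rule hom_mult)
      show "homogeneous 0 (of_int (A i j) :: 'a mpoly)" using hom_mconst by (metis mconst_def single_of_int)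
      show "homogeneous 1 (mvar i :: 'a mpoly)" by (simp add: homogeneous_mdeg mvar_def mdeg_single)
    qed
    then show "homogeneous 1 (of_int (A i j) * mvar i :: 'a mpoly)" by simp
  qed
  then have "homogeneous (1 + 1) ((bott_alpha A j :: 'a mpoly) * mvar j)"
    by (rule hom_mult) (simp add: homogeneous_mdeg mvar_def mdeg_single)
  ultimately show ?thesis by (simp add: homogeneous_mdeg)
qed

lemma bott_ideal_Jdeg: "bott_ideal n A \<subseteq> (Jdeg n :: 'a::comm_ring_1 mpoly set)"
  unfolding bott_ideal_gens
proof (rule PR.genideal_minimal[OF Jdeg_ideal])
  show "gens n A \<subseteq> (Jdeg n :: 'a mpoly set)"
  proof
    fix g :: "'a mpoly" assume g: "g \<in> gens n A"
    then obtain j where j: "g = mvar j ^ 2 - bott_alpha A j * mvar j" unfolding gens_def by blast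
    show "g \<in> Jdeg n" unfolding Jdeg_def
    proof (intro CollectI conjI ballI)
      show "g \<in> carrier (poly_ring n)" using gens_carr g by blast
      fix m assume "m \<in> Poly_Mapping.keys g"
      then have "m \<in> Poly_Mapping.keys ((mvar j :: 'a mpoly) ^ 2) \<or> m \<in> Poly_Mapping.keys ((bott_alpha A j :: 'a mpoly) * mvar j)"
        unfolding j using keys_add[of "(mvar j :: 'a mpoly) ^ 2" "- (bott_alpha A j * mvar j)"]
        by (auto simp: in_keys_iff)
      then show "2 \<le> mdeg m" using mvar_sq_keys[of j, where 'a='a] keys_alpha_mvar[of m A j, where 'a='a] by (auto simp: mdeg_single)
    qed
  qed
qed



definition coeff1 :: "nat \<Rightarrow> 'a::comm_ring_1 mpoly \<Rightarrow> 'a" where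
  "coeff1 l p = Poly_Mapping.lookup p (Poly_Mapping.single l 1)"

lemma coeff1_add: "coeff1 l (p + q) = coeff1 l p + coeff1 l q"
  by (simp add: coeff1_def lookup_add)
lemma coeff1_diff: "coeff1 l (p - q) = coeff1 l p - coeff1 l q"
  by (simp add: coeff1_def lookup_minus)
lemma coeff1_sum: "coeff1 l (sum f S) = (\<Sum>x\<in>S. coeff1 l (f x))"
  by (simp add: coeff1_def lookup_sum)
lemma coeff1_mconst: "coeff1 l (mconst c * p) = c * coeff1 l p"
proof -
  have "mconst c * p = Poly_Mapping.map ((*) c) p"
    by (simp add: mconst_def mult_map_scale_conv_mult)
  then show ?thesis by (simp add: coeff1_def map.rep_eq when_def)
qed
lemma coeff1_of_int: "coeff1 l (of_int c * p) = of_int c * coeff1 l p"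
  by (metis coeff1_mconst mconst_def single_of_int)
lemma coeff1_mvar: "coeff1 l (mvar i) = (if i = l then 1 else 0)"
proof -
  have "Poly_Mapping.single i (1::nat) = Poly_Mapping.single l 1 \<longleftrightarrow> i = l"
    by (metis lookup_single_eq lookup_single_not_eq one_neq_zero)
  then show ?thesis by (auto simp: coeff1_def mvar_def lookup_single when_def)
qed
lemma coeff1_alpha: "bott_matrix n A \<Longrightarrow> coeff1 l (bott_alpha A j) = of_int (A l j)"
  unfolding bott_alpha_def coeff1_sum coeff1_of_int coeff1_mvar
proof -
  assume A: "bott_matrix n A"
  have "(\<Sum>x<j. of_int (A x j) * (if x = l then 1 else 0)) = (\<Sum>x<j. if x = l then (of_int (A l j) :: 'a) else 0)"
    by (rule sum.cong) auto
  also have "\<dots> = of_int (A l j)"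
  proof (cases "l < j")
    case False
    then have "A l j = 0" using A unfolding bott_matrix_def by force
    then show ?thesis using False by simp
  qed (simp add: sum.delta)
  finally show "(\<Sum>x<j. of_int (A x j) * (if x = l then 1 else 0)) = (of_int (A l j) :: 'a)" .
qed

lemma y_carr: "i < n \<Longrightarrow> bott_y A i \<in> carrier (poly_ring n)"
  unfolding bott_y_def by (intro carr_diff carr_mult carr_mvar carr_mconst alpha_carr) auto

lemma ee_char:
  assumes B: "bott_matrix n B" and j: "j < n" and ee: "even_exceptional n B j"
  shows "\<exists>i<j. \<exists>m::int. m \<noteq> 0 \<and> (\<forall>l. B l j = (if l = i then 2*m else 0) - m * B l i)"
proof -
  obtain c :: int and i where i: "i < j" and c: "c \<noteq> 0" "even c"
    and eq: "cohom_class n B (bott_alpha B j :: rat mpoly) = cohom_class n B (of_int c * bott_y B i)"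
    using ee unfolding even_exceptional_def by blast
  obtain m where m: "c = 2 * m" using c(2) by blast
  let ?P = "bott_alpha B j :: rat mpoly" and ?Q = "of_int c * bott_y B i :: rat mpoly"
  have Pc: "?P \<in> carrier (poly_ring n)" by (rule alpha_carr) (use j in simp)
  have Qc: "?Q \<in> carrier (poly_ring n)" by (intro carr_mult carr_of_int y_carr) (use i j in simp)
  have "?P - ?Q \<in> bott_ideal n B" using eq cohom_class_eq[OF Pc Qc] by simp
  then have "?P - ?Q \<in> Jdeg n" using bott_ideal_Jdeg by blast
  then have z: "coeff1 l (?P - ?Q) = 0" for l
    unfolding Jdeg_def coeff1_def by (metis (no_types, lifting) in_keys_iff mdeg_single mem_Collect_eq numeral_le_one_iff semiring_norm(69))
  have "B l j = (if l = i then 2*m else 0) - m * B l i" for l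
  proof -
    have "(of_int (B l j) :: rat) = of_int c * ((if i = l then 1 else 0) - 1/2 * of_int (B l i))"
      using z[of l] unfolding coeff1_diff coeff1_of_int bott_y_def coeff1_mconst coeff1_alpha[OF B] coeff1_mvar
      by simp
    then have "(of_int (B l j) :: rat) = of_int ((if l = i then 2*m else 0) - m * B l i)"
      by (auto simp: m algebra_simps)
    then show ?thesis by (simp only: of_int_eq_iff)
  qed
  then show ?thesis using i c m by auto
qed



definition rel :: "nat \<Rightarrow> (nat \<Rightarrow> nat \<Rightarrow> int) \<Rightarrow> (nat \<Rightarrow> nat \<Rightarrow> int) \<Rightarrow> bool" where
  "rel n A B \<longleftrightarrow> bott_matrix n B \<and> (\<exists>\<psi>. graded_ring_iso n A B \<psi> \<and> \<psi> (pontrjagin n A) = pontrjagin n B)"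

lemma rel_refl: "bott_matrix n A \<Longrightarrow> rel n A A"
  unfolding rel_def graded_ring_iso_def using ring_iso_set_refl by (intro conjI exI[of _ id]) auto

lemma rel_trans: "rel n A B \<Longrightarrow> rel n B C \<Longrightarrow> rel n A C"
  unfolding rel_def graded_ring_iso_def
proof (elim conjE exE, intro conjI exI)
  fix f g assume f: "f \<in> ring_iso (cohom n A) (cohom n B)" "\<forall>d. f ` cohom_deg n A d \<subseteq> cohom_deg n B d"
    "f (pontrjagin n A) = pontrjagin n B"
    and g: "g \<in> ring_iso (cohom n B) (cohom n C)" "\<forall>d. g ` cohom_deg n B d \<subseteq> cohom_deg n C d"
    "g (pontrjagin n B) = pontrjagin n C" and "bott_matrix n C"
  show "g \<circ> f \<in> ring_iso (cohom n A) (cohom n C)" by (rule ring_iso_set_trans[OF f(1) g(1)])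
  show "\<forall>d. (g \<circ> f) ` cohom_deg n A d \<subseteq> cohom_deg n C d" using f(2) g(2) by (fastforce simp: image_comp[symmetric])
  show "(g \<circ> f) (pontrjagin n A) = pontrjagin n C" using f(3) g(3) by simp
  show "bott_matrix n C" by fact
qed

definition lin :: "nat \<Rightarrow> (nat \<Rightarrow> int) \<Rightarrow> 'a::comm_ring_1 mpoly" where
  "lin n c = (\<Sum>l<n. of_int (c l) * mvar l)"

lemma alpha_lin: "bott_matrix n A \<Longrightarrow> k < n \<Longrightarrow> bott_alpha A k = lin n (\<lambda>l. A l k)"
proof -
  assume A: "bott_matrix n A" and k: "k < n"
  have z: "A l k = 0" if "\<not> l < k" for l using A that unfolding bott_matrix_def by force
  show ?thesis unfolding bott_alpha_def lin_def
    by (rule sum.mono_neutral_left) (use k z in auto)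
qed

lemma lin_add: "lin n (\<lambda>l. c l + d l) = lin n c + lin n d"
  by (simp add: lin_def sum.distrib distrib_right)
lemma lin_delta: "i < n \<Longrightarrow> lin n (\<lambda>l. if l = i then a else 0) = of_int a * mvar i"
proof -
  assume i: "i < n"
  have "lin n (\<lambda>l. if l = i then a else 0) = (\<Sum>l<n. if l = i then of_int a * mvar i else (0::'a mpoly))"
    unfolding lin_def by (rule sum.cong) auto
  then show ?thesis using i by (simp add: sum.delta)
qed

definition sub :: "nat \<Rightarrow> nat \<Rightarrow> 'a::comm_ring_1 mpoly \<Rightarrow> nat \<Rightarrow> 'a mpoly" where
  "sub j i M k = (if k = j then mvar j + M * mvar i else mvar k)"

lemma ev_sub_lin: "j < n \<Longrightarrow> ev (sub j i M) (lin n c) = lin n c + of_int (c j) * M * mvar i"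
proof -
  assume j: "j < n"
  have "ev (sub j i M) (lin n c) = (\<Sum>l<n. of_int (c l) * sub j i M l)"
    by (simp add: lin_def ev_sum ev_mult)
  also have "\<dots> = (\<Sum>l<n. of_int (c l) * mvar l + (if l = j then of_int (c j) * M * mvar i else 0))"
    by (rule sum.cong) (auto simp: sub_def algebra_simps)
  also have "\<dots> = lin n c + of_int (c j) * M * mvar i"
    using j by (simp add: sum.distrib lin_def sum.delta)
  finally show ?thesis .
qed

definition stepM :: "(nat \<Rightarrow> nat \<Rightarrow> int) \<Rightarrow> nat \<Rightarrow> nat \<Rightarrow> int \<Rightarrow> nat \<Rightarrow> nat \<Rightarrow> int" where
  "stepM A j i m = (\<lambda>l k. A l k + (if l = i then m * A j k - (if k = j then 2*m else 0) else 0))"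

lemma stepM_matrix: "bott_matrix n A \<Longrightarrow> i < j \<Longrightarrow> j < n \<Longrightarrow> bott_matrix n (stepM A j i m)"
  unfolding bott_matrix_def
proof (intro allI impI)
  fix l k assume A: "\<forall>i j. A i j \<noteq> 0 \<longrightarrow> i < j \<and> j < n" and ij: "i < j" "j < n"
    and nz: "stepM A j i m l k \<noteq> 0"
  show "l < k \<and> k < n"
  proof (cases "l = i")
    case False then show ?thesis using nz A by (simp add: stepM_def)
  next
    case True
    then have "A i k \<noteq> 0 \<or> A j k \<noteq> 0 \<or> k = j" using nz by (auto simp: stepM_def split: if_splits)
    then show ?thesis using A ij True by (metis order.strict_trans)
  qed
qed

lemma hom1_mvar: "homogeneous 1 (mvar i :: 'a::comm_ring_1 mpoly)"
  by (simp add: homogeneous_mdeg mvar_def mdeg_single)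

lemma hom1_sub: "homogeneous 1 (sub j i (of_int m) k :: 'a::comm_ring_1 mpoly)"
proof -
  have "homogeneous (0 + 1) (of_int m * mvar i :: 'a mpoly)"
    by (rule hom_mult) (use hom_mconst hom1_mvar in \<open>metis mconst_def single_of_int\<close>)+
  then show ?thesis unfolding sub_def using hom1_mvar by (auto intro: hom_add)
qed

lemma ev_hom1: "(\<And>i. homogeneous 1 (\<sigma> i)) \<Longrightarrow> p \<in> carrier (poly_ring n) \<Longrightarrow> (\<And>i. i < n \<Longrightarrow> \<sigma> i \<in> carrier (poly_ring n))
  \<Longrightarrow> cohom_class n B (ev \<sigma> p) \<in> cohom_deg n B d \<or> \<not> (p = 0 \<or> (even d \<and> homogeneous (d div 2) p))"
  unfolding cohom_deg_def using ev_carr[of p n \<sigma>] ev_hom[of "d div 2" p \<sigma>] by auto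



lemma step_rel:
  assumes A: "bott_matrix n A" and ij: "i < j" "j < n"
    and cond: "\<forall>l. A l j = (if l = i then 2*m else 0) - m * A l i"
  shows "rel n A (stepM A j i m)"
proof -
  define B where "B = stepM A j i m"
  have B: "bott_matrix n B" unfolding B_def by (rule stepM_matrix[OF A ij])
  define M :: "int mpoly" where "M = of_int m"
  define X :: "nat \<Rightarrow> int mpoly" where "X = mvar"
  define a :: "nat \<Rightarrow> int mpoly" where "a = bott_alpha A"
  define b :: "nat \<Rightarrow> int mpoly" where "b = bott_alpha B"
  define \<sigma> :: "nat \<Rightarrow> int mpoly" where "\<sigma> = sub j i M"
  define \<tau> :: "nat \<Rightarrow> int mpoly" where "\<tau> = sub j i (- M)"
  have i: "i < n" "i \<noteq> j" using ij by auto
  have Ajj: "A j j = 0" "A j i = 0" using A ij unfolding bott_matrix_def by (metis less_irrefl, metis less_asym)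
  have BjA: "B j k = A j k" for k using i by (simp add: B_def stepM_def)
  have F2: "b k = a k + of_int (m * A j k) * X i - (if k = j then of_int (2*m) * X i else 0)" if k: "k < n" for k
  proof -
    have "b k = lin n (\<lambda>l. A l k + (if l = i then m * A j k - (if k = j then 2*m else 0) else 0))"
      unfolding b_def using alpha_lin[OF B k] by (simp add: B_def stepM_def)
    also have "\<dots> = a k + of_int (m * A j k - (if k = j then 2*m else 0)) * X i"
      unfolding lin_add lin_delta[OF i(1)] a_def alpha_lin[OF A k] X_def by simp
    finally show ?thesis by (cases "k = j") (simp_all add: algebra_simps)
  qed
  have F3: "ev \<sigma> (a k) = a k + of_int (A j k) * M * X i" if k: "k < n" for k
    unfolding a_def alpha_lin[OF A k] \<sigma>_def X_def by (rule ev_sub_lin[OF ij(2)])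
  have F4: "ev \<tau> (b k) = b k - of_int (A j k) * M * X i" if k: "k < n" for k
    unfolding b_def alpha_lin[OF B k] \<tau>_def X_def ev_sub_lin[OF ij(2)] BjA by simp
  have bi: "b i = a i" using F2[OF i(1)] Ajj i by simp
  have aj: "a j = of_int (2*m) * X i - M * a i"
  proof -
    have "a j = lin n (\<lambda>l. (if l = i then 2*m else 0) + (- m) * A l i)"
      unfolding a_def alpha_lin[OF A ij(2)] using cond by simp
    also have "\<dots> = of_int (2*m) * X i - M * a i"
      unfolding lin_add lin_delta[OF i(1)] a_def alpha_lin[OF A i(1)] X_def M_def
      by (simp add: lin_def sum_distrib_left algebra_simps sum_negf)
    finally show ?thesis .
  qed
  have aj': "a j = 2 * M * X i - M * a i" using aj by (simp add: M_def)
  have bj: "b j = - M * a i" using F2[OF ij(2)] Ajj aj by (simp add: M_def algebra_simps)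
  have Xc: "X k \<in> carrier (poly_ring n)" if "k < n" for k unfolding X_def by (rule carr_mvar[OF that])
  have Mc: "M \<in> carrier (poly_ring n)" unfolding M_def by (rule carr_of_int)
  have ac: "a k \<in> carrier (poly_ring n)" if "k < n" for k unfolding a_def by (rule alpha_carr) (use that in simp)
  have bc: "b k \<in> carrier (poly_ring n)" if "k < n" for k unfolding b_def by (rule alpha_carr) (use that in simp)
  have subc: "sub j i (N::int mpoly) k \<in> carrier (poly_ring n)" if "k < n" "N \<in> carrier (poly_ring n)" for k N
  proof (cases "k = j")
    case True
    then show ?thesis unfolding sub_def
      using carr_add[OF Xc[OF ij(2)] carr_mult[OF that(2) Xc[OF i(1)]]] by (simp add: X_def)
  next
    case False
    then show ?thesis unfolding sub_def using Xc[OF that(1)] by (simp add: X_def)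
  qed
  have sc: "\<sigma> k \<in> carrier (poly_ring n)" if "k < n" for k
    unfolding \<sigma>_def by (rule subc[OF that Mc])
  have mMc: "- M \<in> carrier (poly_ring n)" unfolding M_def using carr_of_int[of "-m"] by simp
  have tc: "\<tau> k \<in> carrier (poly_ring n)" if "k < n" for k
    unfolding \<tau>_def by (rule subc[OF that mMc])
  have gA: "X k ^ 2 - a k * X k \<in> bott_ideal n A" if "k < n" for k
    unfolding X_def a_def by (rule gen_in_ideal[OF that])
  have gB: "X k ^ 2 - b k * X k \<in> bott_ideal n B" if "k < n" for k
    unfolding X_def b_def by (rule gen_in_ideal[OF that])
  have IA: "ideal (bott_ideal n A :: int mpoly set) (poly_ring n)" by (rule bott_ideal_ideal)
  have IB: "ideal (bott_ideal n B :: int mpoly set) (poly_ring n)" by (rule bott_ideal_ideal)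
  have M2c: "M^2 \<in> carrier (poly_ring n)" using carr_power[OF Mc] .
  have ts: "ev \<tau> (\<sigma> k) = mvar k" if "k < n" for k
    using i by (simp add: \<sigma>_def \<tau>_def sub_def ev_add ev_mult M_def)
  have st: "ev \<sigma> (\<tau> k) = mvar k" if "k < n" for k
    using i by (simp add: \<sigma>_def \<tau>_def sub_def ev_add ev_mult ev_uminus ev_diff M_def)
  have sg: "ev \<sigma> g \<in> bott_ideal n B" if g: "g \<in> gens n A" for g
  proof -
    obtain k where k: "k < n" "g = X k ^ 2 - a k * X k" using g unfolding gens_def X_def a_def by blast
    show ?thesis
    proof (cases "k = j")
      case False
      have "ev \<sigma> g = X k ^ 2 - b k * X k"
        unfolding k(2) using False k(1) F2[OF k(1)] F3[OF k(1)]
        by (simp add: ev_diff ev_mult ev_power \<sigma>_def sub_def X_def M_def algebra_simps)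
      then show ?thesis using gB[OF k(1)] by simp
    next
      case True
      have e1: "ev \<sigma> (X j) = X j + M * X i" by (simp add: \<sigma>_def sub_def X_def)
      have e2: "ev \<sigma> (a j) = a j" using F3[OF ij(2)] Ajj by simp
      have "ev \<sigma> g = (X j + M * X i)^2 - a j * (X j + M * X i)"
        unfolding k(2) True by (simp add: ev_diff ev_mult ev_power e1 e2)
      also have "\<dots> = (X j ^ 2 - b j * X j) - M^2 * (X i ^ 2 - b i * X i)"
        unfolding aj' bj bi by (simp add: power2_eq_square algebra_simps)
      finally have "ev \<sigma> g = (X j ^ 2 - b j * X j) - M^2 * (X i ^ 2 - b i * X i)" .
      then show ?thesis using ideal_diff[OF IB gB[OF ij(2)] ideal_mult[OF IB gB[OF i(1)] M2c]] by simp
    qed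
  qed
  have tg: "ev \<tau> g \<in> bott_ideal n A" if g: "g \<in> gens n B" for g
  proof -
    obtain k where k: "k < n" "g = X k ^ 2 - b k * X k" using g unfolding gens_def X_def b_def by blast
    show ?thesis
    proof (cases "k = j")
      case False
      have e1: "ev \<tau> (X k) = X k" using False by (simp add: \<tau>_def sub_def X_def)
      have e2: "ev \<tau> (b k) = a k" using F4[OF k(1)] F2[OF k(1)] False by (simp add: M_def algebra_simps)
      have "ev \<tau> g = X k ^ 2 - a k * X k"
        unfolding k(2) by (simp add: ev_diff ev_mult ev_power e1 e2)
      then show ?thesis using gA[OF k(1)] by simp
    next
      case True
      have e1: "ev \<tau> (X j) = X j - M * X i" by (simp add: \<tau>_def sub_def X_def)
      have e2: "ev \<tau> (b j) = b j" using F4[OF ij(2)] Ajj by simp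
      have "ev \<tau> g = (X j - M * X i)^2 - b j * (X j - M * X i)"
        unfolding k(2) True by (simp add: ev_diff ev_mult ev_power e1 e2)
      also have "\<dots> = (X j ^ 2 - a j * X j) + M^2 * (X i ^ 2 - a i * X i)"
        unfolding aj' bj by (simp add: power2_eq_square algebra_simps)
      finally have "ev \<tau> g = (X j ^ 2 - a j * X j) + M^2 * (X i ^ 2 - a i * X i)" .
      then show ?thesis using ideal_add[OF IA gA[OF ij(2)] ideal_mult[OF IA gA[OF i(1)] M2c]] by simp
    qed
  qed
  obtain \<psi> where \<psi>: "\<psi> \<in> ring_iso (cohom n A) (cohom n B)"
    "\<And>p. p \<in> carrier (poly_ring n) \<Longrightarrow> \<psi> (cohom_class n A p) = cohom_class n B (ev \<sigma> p)"
    using quot_iso[OF sc tc ts st sg tg] by blast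
  have grad: "\<psi> ` cohom_deg n A d \<subseteq> cohom_deg n B d" for d
  proof
    fix Y assume "Y \<in> \<psi> ` cohom_deg n A d"
    then obtain p where p: "p \<in> carrier (poly_ring n)" "p = 0 \<or> (even d \<and> homogeneous (d div 2) p)"
      "Y = \<psi> (cohom_class n A p)" unfolding cohom_deg_def by blast
    have "homogeneous 1 (\<sigma> k)" for k unfolding \<sigma>_def M_def by (rule hom1_sub)
    then show "Y \<in> cohom_deg n B d"
      using ev_hom1[of \<sigma> p n B d, OF _ p(1) sc] p \<psi>(2)[OF p(1)] by auto
  qed
  have pont: "\<psi> (pontrjagin n A) = pontrjagin n B"
  proof -
    let ?PA = "\<Prod>k<n. 1 + a k ^ 2" and ?PB = "\<Prod>k<n. 1 + b k ^ 2"
    have PAc: "?PA \<in> carrier (poly_ring n)"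
      by (intro carr_prod carr_add carr_power ac) auto
    have "ev \<sigma> ?PA = (\<Prod>k<n. 1 + ev \<sigma> (a k) ^ 2)" by (simp add: ev_prod ev_add ev_power)
    moreover have "(\<Prod>k<n. 1 + ev \<sigma> (a k) ^ 2) - ?PB \<in> bott_ideal n B"
    proof (rule prod_diff_ideal[OF IB])
      fix k assume k: "k \<in> {..<n}"
      have e1: "ev \<sigma> (a k) \<in> carrier (poly_ring n)" using ev_carr[OF ac sc] k by auto
      have d: "(1 + ev \<sigma> (a k) ^ 2) - (1 + b k ^ 2) \<in> bott_ideal n B"
      proof (cases "k = j")
        case False
        then have "ev \<sigma> (a k) = b k" using F2[of k] F3[of k] k by (simp add: M_def algebra_simps)
        then show ?thesis using ideal_zero[OF IB] by simp
      next
        case True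
        have e2: "ev \<sigma> (a j) = a j" using F3[OF ij(2)] Ajj by simp
        have "(1 + ev \<sigma> (a k) ^ 2) - (1 + b k ^ 2) = (4 * M^2) * (X i ^ 2 - b i * X i)"
          unfolding True e2 unfolding aj' bj bi by (simp add: power2_eq_square algebra_simps)
        moreover have "4 * M^2 \<in> carrier (poly_ring n)" using carr_mult[OF carr_of_int[of 4] M2c] by simp
        ultimately show ?thesis using ideal_mult[OF IB gB[OF i(1)]] by simp
      qed
      show "(1 + ev \<sigma> (a k) ^ 2) \<in> carrier (poly_ring n) \<and> (1 + b k ^ 2) \<in> carrier (poly_ring n) \<and>
            (1 + ev \<sigma> (a k) ^ 2) - (1 + b k ^ 2) \<in> bott_ideal n B"
      proof -
        have c1: "(1::int mpoly) \<in> carrier (poly_ring n)" by simp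
        have kn: "k < n" using k by simp
        show ?thesis using d carr_add[OF c1 carr_power[OF e1]] carr_add[OF c1 carr_power[OF bc[OF kn]]] by blast
      qed
    qed
    moreover have "(\<Prod>k<n. 1 + ev \<sigma> (a k) ^ 2) \<in> carrier (poly_ring n)"
      using ev_carr[OF PAc sc] by (simp add: ev_prod ev_add ev_power)
    moreover have "?PB \<in> carrier (poly_ring n)"
      by (intro carr_prod carr_add carr_power bc) auto
    ultimately have "cohom_class n B (ev \<sigma> ?PA) = cohom_class n B ?PB"
      using cohom_class_eq by metis
    then show ?thesis using \<psi>(2)[OF PAc] unfolding pontrjagin_def a_def b_def by simp
  qed
  show ?thesis unfolding rel_def graded_ring_iso_def B_def[symmetric]
    using B \<psi>(1) grad pont by blast
qed



definition good :: "(nat \<Rightarrow> nat \<Rightarrow> int) \<Rightarrow> nat \<Rightarrow> bool" where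
  "good B k \<longleftrightarrow> \<not> (\<exists>i<k. \<exists>m::int. m \<noteq> 0 \<and> (\<forall>l. B l k = (if l = i then 2*m else 0) - m * B l i))"

lemma good_not_ee: "bott_matrix n B \<Longrightarrow> k < n \<Longrightarrow> good B k \<Longrightarrow> \<not> even_exceptional n B k"
  using ee_char unfolding good_def by blast

lemma good_cong: "(\<And>l k'. k' \<le> k \<Longrightarrow> B l k' = C l k') \<Longrightarrow> good B k \<longleftrightarrow> good C k"
  proof -
  assume h: "\<And>l k'. k' \<le> k \<Longrightarrow> B l k' = C l k'"
  have "(\<forall>l. B l k = (if l = i then 2*m else 0) - m * B l i) \<longleftrightarrow> (\<forall>l. C l k = (if l = i then 2*m else 0) - m * C l i)"
    if "i < k" for i m using h[of k] h[of i] that by simp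
  then show ?thesis unfolding good_def by blast
qed

lemma stepM_cols: "bott_matrix n C \<Longrightarrow> k < p \<Longrightarrow> stepM C p i m l k = C l k"
  proof -
  assume C: "bott_matrix n C" and k: "k < p"
  have "C p k = 0" using C k unfolding bott_matrix_def by (meson less_asym)
  then show ?thesis using k by (simp add: stepM_def)
qed

lemma inner:
  assumes "p < n"
  shows "\<And>C. rel n A C \<Longrightarrow> (\<forall>k<p. good C k) \<Longrightarrow> (\<forall>l\<ge>t. C l p = 0) \<Longrightarrow>
     \<exists>D. rel n A D \<and> (\<forall>k<Suc p. good D k)"
proof (induction t rule: less_induct)
  case (less t C)
  have Cm: "bott_matrix n C" using less.prems(1) unfolding rel_def by blast
  show ?case
  proof (cases "good C p")
    case True
    then show ?thesis using less.prems by (metis less_Suc_eq)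
  next
    case False
    then obtain i m where i: "i < p" and m: "m \<noteq> 0" and cond: "\<forall>l. C l p = (if l = i then 2*m else 0) - m * C l i"
      unfolding good_def by blast
    have Cii: "C i i = 0" using Cm unfolding bott_matrix_def by blast
    have "C i p \<noteq> 0" using cond Cii m by simp
    then have it: "i < t" using less.prems(3) by (meson not_le)
    define D where "D = stepM C p i m"
    have "rel n C D" unfolding D_def by (rule step_rel[OF Cm i assms cond])
    then have rD: "rel n A D" using rel_trans less.prems(1) by blast
    have cols: "D l k = C l k" if "k < p" for l k unfolding D_def by (rule stepM_cols[OF Cm that])
    have gD: "\<forall>k<p. good D k"
      proof (intro allI impI)
      fix k assume "k < p"
      then have "good D k \<longleftrightarrow> good C k" by (intro good_cong cols) simp
      then show "good D k" using less.prems(2) \<open>k < p\<close> by blast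
    qed
    have Dp: "D l p = - m * C l i" for l
      proof -
      have "C p p = 0" using Cm unfolding bott_matrix_def by blast
      then show ?thesis using cond[rule_format, of l] unfolding D_def stepM_def by (auto simp: algebra_simps)
    qed
    have Dz: "\<forall>l\<ge>i. D l p = 0"
      proof (intro allI impI)
      fix l assume "i \<le> l"
      then have "C l i = 0" using Cm unfolding bott_matrix_def by (meson not_le)
      then show "D l p = 0" using Dp by simp
    qed
    show ?thesis using less.IH[OF it rD gD Dz] .
  qed
qed

lemma outer: "bott_matrix n A \<Longrightarrow> p \<le> n \<Longrightarrow> \<exists>B. rel n A B \<and> (\<forall>k<p. good B k)"
proof (induction p)
  case 0
  then show ?case using rel_refl by blast
next
  case (Suc p)
  then obtain B where B: "rel n A B" "\<forall>k<p. good B k" by auto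
  have Bm: "bott_matrix n B" using B(1) unfolding rel_def by blast
  have "\<forall>l\<ge>n. B l p = 0" proof (intro allI impI)
    fix l assume "n \<le> l"
    show "B l p = 0"
    proof (rule ccontr)
      assume "B l p \<noteq> 0"
      then have "l < p" "p < n" using Bm unfolding bott_matrix_def by blast+
      then show False using \<open>n \<le> l\<close> by simp
    qed
  qed
  then show ?case using inner[of p n, where t=n and A=A and C=B] B Suc.prems by auto
qed

theorem lemma4p5:
  fixes n :: nat and A :: "nat \<Rightarrow> nat \<Rightarrow> int"
  assumes "bott_matrix n A"
  shows "\<exists>B \<psi>. bott_matrix n B \<and> (\<forall>j<n. \<not> even_exceptional n B j) \<and>
           graded_ring_iso n A B \<psi> \<and> \<psi> (pontrjagin n A) = pontrjagin n B"
proof -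
  obtain B where B: "rel n A B" "\<forall>k<n. good B k" using outer[OF assms order_refl] by blast
  then obtain \<psi> where "bott_matrix n B" "graded_ring_iso n A B \<psi>" "\<psi> (pontrjagin n A) = pontrjagin n B"
    unfolding rel_def by blast
  moreover have "\<forall>j<n. \<not> even_exceptional n B j" using B(2) good_not_ee[OF \<open>bott_matrix n B\<close>] by blast
  ultimately show ?thesis by blast
qed


end
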